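(* In the setting of the context, let $\ell\in L$, $G_d=(U_d\mid T_d\mid F_d)$ (the matrix $M^{\Delta,H}_d$ with block $R_d$ removed) and $G_{d,I(\ell)}$ its submatrix of rows indexed by $I(\ell)$. Then $$H_d(\ell)=\Big\{[z]\in H_d\ \Big|\ z\in Z_d \text{ has } z^\Delta=U_d\upsilon+T_d\tau+F_d\varphi \text{ with } \begin{pmatrix}\upsilon\\\tau\\\varphi\end{pmatrix}\in\ker G_{d,I(\ell)}\Big\},$$ where, under the isomorphism $H_d\cong\bigoplus_{i=1}^{n_T}\mathbb{D}/(a^d_i)\oplus\mathbb{D}^{n_F}$, such a class $[z]$ has coordinates $(\pi^d(\tau),\varphi)$, $\pi^d$ being the componentwise projections $\mathbb{D}\to\mathbb{D}/(a^d_i)$.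
   Context: $(L,\leq)$ is a CDL (poset with all joins and meets, distributing over each other; least element $0$). $\Delta$ is a finite simplicial complex, $\mathbb{D}$ a PID, $\mu:\Delta\to L$ an $L$-fuzzy subcomplex ($\mu(\sigma_1)\geq\mu(\sigma_2)$ whenever $\sigma_1$ is a face of $\sigma_2$). $\sigma^d_1,\dots,\sigma^d_{n_d}$ are the positively oriented $d$-simplices, $C_d$ the free $\mathbb{D}$-module on them, $c^\Delta$ the coordinate vector; $Z_d=\ker\partial_d$, $B_d=\operatorname{im}\partial_{d+1}$, $H_d=Z_d/B_d$. Reduced bases: fix bases $E^H_d$ of $C_d$ with change-of-basis matrices $M^{\Delta,H}_d$ (columns = simplex-coordinates of elements of $E^H_d$) such that the matrix $D_d$ of $\partial_d$ w.r.t. $E^H_d,E^H_{d-1}$ has the form $(0_{n_{d-1}\times r_{d+1}}\mid D'_d)$, $r_{d+1}=\operatorname{rank}\partial_{d+1}$, the only nonzero entries of $D'_d$ being its first $r_d$ diagonal entries, successively dividing. Elements of $E^H_d$ are of type U (column in $D_d$ zero, row in $D_{d+1}$ has a unit entry), T (column zero, row has a nonzero non-unit entry), R (column nonzero) or F (column zero, row zero), ordered U,T,R,F; $M^{\Delta,H}_d=(U_d\mid T_d\mid R_d\mid F_d)$ with $n_U,n_T,n_R,n_F$ columns; $a^d_1,\dots,a^d_{n_T}$ are the nonzero row entries of the T generators and $A_d=\operatorname{diag}(a^d_i)$. Then $Z_d$ consists of the chains with coordinates $U_d\upsilon+T_d\tau+F_d\varphi$, $B_d$ of those with coordinates $U_d\upsilon+T_dA_d\tau$,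 and $[z]\mapsto(\pi^d(\tau),\varphi)$ is an isomorphism $H_d\cong\bigoplus_i\mathbb{D}/(a^d_i)\oplus\mathbb{D}^{n_F}$. Constraint system: $S(c,I)$ is $(U_d\mid T_dA_d)_I\binom{\upsilon}{\tau}=-c^\Delta_I$ in unknowns $\upsilon\in\mathbb{D}^{n_U},\tau\in\mathbb{D}^{n_T}$ (rows indexed by $I$). $I(\ell)=\{i\mid\mu(\sigma^d_i)\not\geq\ell\}$. $H_d(\ell)=\{[h]\in H_d\mid S(h,I(\ell))\text{ solvable}\}$ (independent of the representative $h\in Z_d$). *)

theory Defs
  imports "Jordan_Normal_Form.Matrix_Kernel" "Jordan_Normal_Form.DL_Submatrix"
begin

definition is_ideal :: "'a::comm_ring_1 set \<Rightarrow> bool" where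
  "is_ideal I \<longleftrightarrow> 0 \<in> I \<and> (\<forall>x\<in>I. \<forall>y\<in>I. x + y \<in> I) \<and> (\<forall>x\<in>I. \<forall>r. r * x \<in> I)"

definition is_PID :: "'a::idom itself \<Rightarrow> bool" where
  "is_PID T \<longleftrightarrow> (\<forall>I::'a set. is_ideal I \<longrightarrow> (\<exists>a. I = {a * x | x. True}))"

definition residue :: "'a::comm_ring_1 \<Rightarrow> 'a \<Rightarrow> 'a set" where
  "residue a t = {t + a * x | x. True}"

definition simplicial_complex :: "'v set set \<Rightarrow> bool" where
  "simplicial_complex K \<longleftrightarrow> finite K \<and> (\<forall>\<sigma>\<in>K. finite \<sigma> \<and> \<sigma> \<noteq> {}) \<and>
     (\<forall>\<sigma>\<in>K. \<forall>\<tau>. \<tau> \<subseteq> \<sigma> \<and> \<tau> \<noteq> {} \<longrightarrow> \<tau> \<in> K)"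

definition simplices :: "'v set set \<Rightarrow> nat \<Rightarrow> 'v set set" where
  "simplices K d = {\<sigma>\<in>K. card \<sigma> = Suc d}"

definition fuzzy_subcomplex :: "'v set set \<Rightarrow> ('v set \<Rightarrow> 'l::order) \<Rightarrow> bool" where
  "fuzzy_subcomplex K \<mu> \<longleftrightarrow> (\<forall>\<sigma>1\<in>K. \<forall>\<sigma>2\<in>K. \<sigma>1 \<subseteq> \<sigma>2 \<longrightarrow> \<mu> \<sigma>2 \<le> \<mu> \<sigma>1)"

text \<open>sl d is the enumeration sigma^d_1, ..., sigma^d_{n_d} (0-based here) of the d-simplices.\<close>
definition enumeration :: "'v set set \<Rightarrow> (nat \<Rightarrow> 'v set list) \<Rightarrow> bool" where
  "enumeration K sl \<longleftrightarrow> (\<forall>d. distinct (sl d) \<and> set (sl d) = simplices K d)"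

abbreviation nsimp :: "(nat \<Rightarrow> 'v set list) \<Rightarrow> nat \<Rightarrow> nat" where
  "nsimp sl d \<equiv> length (sl d)"

section \<open>Boundary matrices (positive orientation = increasing vertex order)\<close>

definition bdry_coeff :: "'v::linorder set \<Rightarrow> 'v set \<Rightarrow> 'a::comm_ring_1" where
  "bdry_coeff \<tau> \<sigma> = (\<Sum>k<card \<sigma>. if \<tau> = \<sigma> - {sorted_list_of_set \<sigma> ! k} then (-1) ^ k else 0)"

definition bdry_mat :: "(nat \<Rightarrow> 'v::linorder set list) \<Rightarrow> nat \<Rightarrow> 'a::comm_ring_1 mat" where
  "bdry_mat sl d = (if d = 0 then 0\<^sub>m 0 (nsimp sl 0)
     else mat (nsimp sl (d - 1)) (nsimp sl d) (\<lambda>(i, j). bdry_coeff (sl (d - 1) ! i) (sl d ! j)))"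

text \<open>Matrix D_d of partial_d w.r.t. the bases E^H_d, E^H_{d-1} (columns of M d).\<close>
definition red_mat :: "(nat \<Rightarrow> 'v::linorder set list) \<Rightarrow> (nat \<Rightarrow> 'a::comm_ring_1 mat) \<Rightarrow> nat \<Rightarrow> 'a mat" where
  "red_mat sl M d = (if d = 0 then 0\<^sub>m 0 (nsimp sl 0)
     else (SOME D. D \<in> carrier_mat (nsimp sl (d - 1)) (nsimp sl d) \<and> M (d - 1) * D = bdry_mat sl d * M d))"

text \<open>Reduced bases: M d is an invertible change of basis and D_d = (0_{r_{d+1}} | D'_d), the only
  nonzero entries of D'_d being its first r_d diagonal entries, successively dividing.
  (These conditions force r_d = rank partial_d.)\<close>
definition reduced_bases :: "(nat \<Rightarrow> 'v::linorder set list) \<Rightarrow> (nat \<Rightarrow> 'a::comm_ring_1 mat) \<Rightarrow> bool" where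
  "reduced_bases sl M \<longleftrightarrow>
     (\<forall>d. M d \<in> carrier_mat (nsimp sl d) (nsimp sl d) \<and> invertible_mat (M d)) \<and>
     (\<exists>r :: nat \<Rightarrow> nat. \<forall>d.
        r (Suc d) + r d \<le> nsimp sl d \<and> r d \<le> dim_row (red_mat sl M d) \<and>
        (\<forall>i < dim_row (red_mat sl M d). \<forall>j < dim_col (red_mat sl M d).
           red_mat sl M d $$ (i, j) \<noteq> 0 \<longleftrightarrow> (i < r d \<and> j = r (Suc d) + i)) \<and>
        (\<forall>i. Suc i < r d \<longrightarrow>
           red_mat sl M d $$ (i, r (Suc d) + i) dvd red_mat sl M d $$ (Suc i, r (Suc d) + Suc i)))"

definition col_zero :: "(nat \<Rightarrow> 'v::linorder set list) \<Rightarrow> (nat \<Rightarrow> 'a::comm_ring_1 mat) \<Rightarrow> nat \<Rightarrow> nat \<Rightarrow> bool" where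
  "col_zero sl M d j \<longleftrightarrow> (\<forall>i < dim_row (red_mat sl M d). red_mat sl M d $$ (i, j) = 0)"

definition row_entries :: "(nat \<Rightarrow> 'v::linorder set list) \<Rightarrow> (nat \<Rightarrow> 'a::comm_ring_1 mat) \<Rightarrow> nat \<Rightarrow> nat \<Rightarrow> 'a set" where
  "row_entries sl M d j = {red_mat sl M (Suc d) $$ (j, k) | k. k < dim_col (red_mat sl M (Suc d))}"

definition typeU :: "(nat \<Rightarrow> 'v::linorder set list) \<Rightarrow> (nat \<Rightarrow> 'a::comm_ring_1 mat) \<Rightarrow> nat \<Rightarrow> nat \<Rightarrow> bool" where
  "typeU sl M d j \<longleftrightarrow> col_zero sl M d j \<and> (\<exists>x\<in>row_entries sl M d j. x dvd 1)"

definition typeT :: "(nat \<Rightarrow> 'v::linorder set list) \<Rightarrow> (nat \<Rightarrow> 'a::comm_ring_1 mat) \<Rightarrow> nat \<Rightarrow> nat \<Rightarrow> bool" where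
  "typeT sl M d j \<longleftrightarrow> col_zero sl M d j \<and> (\<exists>x\<in>row_entries sl M d j. x \<noteq> 0 \<and> \<not> x dvd 1)"

definition typeR :: "(nat \<Rightarrow> 'v::linorder set list) \<Rightarrow> (nat \<Rightarrow> 'a::comm_ring_1 mat) \<Rightarrow> nat \<Rightarrow> nat \<Rightarrow> bool" where
  "typeR sl M d j \<longleftrightarrow> \<not> col_zero sl M d j"

definition typeF :: "(nat \<Rightarrow> 'v::linorder set list) \<Rightarrow> (nat \<Rightarrow> 'a::comm_ring_1 mat) \<Rightarrow> nat \<Rightarrow> nat \<Rightarrow> bool" where
  "typeF sl M d j \<longleftrightarrow> col_zero sl M d j \<and> (\<forall>x\<in>row_entries sl M d j. x = 0)"

definition nU :: "(nat \<Rightarrow> 'v::linorder set list) \<Rightarrow> (nat \<Rightarrow> 'a::comm_ring_1 mat) \<Rightarrow> nat \<Rightarrow> nat" where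
  "nU sl M d = card {j. j < nsimp sl d \<and> typeU sl M d j}"
definition nT :: "(nat \<Rightarrow> 'v::linorder set list) \<Rightarrow> (nat \<Rightarrow> 'a::comm_ring_1 mat) \<Rightarrow> nat \<Rightarrow> nat" where
  "nT sl M d = card {j. j < nsimp sl d \<and> typeT sl M d j}"
definition nR :: "(nat \<Rightarrow> 'v::linorder set list) \<Rightarrow> (nat \<Rightarrow> 'a::comm_ring_1 mat) \<Rightarrow> nat \<Rightarrow> nat" where
  "nR sl M d = card {j. j < nsimp sl d \<and> typeR sl M d j}"
definition nF :: "(nat \<Rightarrow> 'v::linorder set list) \<Rightarrow> (nat \<Rightarrow> 'a::comm_ring_1 mat) \<Rightarrow> nat \<Rightarrow> nat" where
  "nF sl M d = card {j. j < nsimp sl d \<and> typeF sl M d j}"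

text \<open>Column blocks of M_d = (U_d | T_d | R_d | F_d) (basis ordered U, T, R, F).\<close>
definition col_block :: "'a mat \<Rightarrow> nat \<Rightarrow> nat \<Rightarrow> 'a mat" where
  "col_block A off k = mat (dim_row A) k (\<lambda>(i, j). A $$ (i, off + j))"

definition Ublk where "Ublk sl M d = col_block (M d) 0 (nU sl M d)"
definition Tblk where "Tblk sl M d = col_block (M d) (nU sl M d) (nT sl M d)"
definition Rblk where "Rblk sl M d = col_block (M d) (nU sl M d + nT sl M d) (nR sl M d)"
definition Fblk where "Fblk sl M d = col_block (M d) (nU sl M d + nT sl M d + nR sl M d) (nF sl M d)"

definition Gmat :: "(nat \<Rightarrow> 'v::linorder set list) \<Rightarrow> (nat \<Rightarrow> 'a::comm_ring_1 mat) \<Rightarrow> nat \<Rightarrow> 'a mat" where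
  "Gmat sl M d = mat (nsimp sl d) (nU sl M d + nT sl M d + nF sl M d)
     (\<lambda>(i, j). if j < nU sl M d + nT sl M d then M d $$ (i, j) else M d $$ (i, j + nR sl M d))"

definition tors_coeff :: "(nat \<Rightarrow> 'v::linorder set list) \<Rightarrow> (nat \<Rightarrow> 'a::comm_ring_1 mat) \<Rightarrow> nat \<Rightarrow> nat \<Rightarrow> 'a" where
  "tors_coeff sl M d i = (SOME x. x \<in> row_entries sl M d (nU sl M d + i) \<and> x \<noteq> 0)"

definition Amat :: "(nat \<Rightarrow> 'v::linorder set list) \<Rightarrow> (nat \<Rightarrow> 'a::comm_ring_1 mat) \<Rightarrow> nat \<Rightarrow> 'a mat" where
  "Amat sl M d = mat (nT sl M d) (nT sl M d) (\<lambda>(i, j). if i = j then tors_coeff sl M d i else 0)"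

section \<open>Cycles, boundaries, homology (chains identified with their coordinate vectors)\<close>

definition cycles :: "(nat \<Rightarrow> 'v::linorder set list) \<Rightarrow> nat \<Rightarrow> 'a::comm_ring_1 vec set" where
  "cycles sl d = {z \<in> carrier_vec (nsimp sl d). bdry_mat sl d *\<^sub>v z = 0\<^sub>v (dim_row (bdry_mat sl d :: 'a mat))}"

definition boundaries :: "(nat \<Rightarrow> 'v::linorder set list) \<Rightarrow> nat \<Rightarrow> 'a::comm_ring_1 vec set" where
  "boundaries sl d = {bdry_mat sl (Suc d) *\<^sub>v c | c. c \<in> carrier_vec (nsimp sl (Suc d))}"

definition hclass :: "(nat \<Rightarrow> 'v::linorder set list) \<Rightarrow> nat \<Rightarrow> 'a::comm_ring_1 vec \<Rightarrow> 'a vec set" where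
  "hclass sl d z = {z + b | b. b \<in> boundaries sl d}"

definition homology :: "(nat \<Rightarrow> 'v::linorder set list) \<Rightarrow> nat \<Rightarrow> 'a::comm_ring_1 vec set set" where
  "homology sl d = hclass sl d ` cycles sl d"

definition Iset :: "(nat \<Rightarrow> 'v set list) \<Rightarrow> ('v set \<Rightarrow> 'l::order) \<Rightarrow> nat \<Rightarrow> 'l \<Rightarrow> nat set" where
  "Iset sl \<mu> d l = {i. i < nsimp sl d \<and> \<not> (\<mu> (sl d ! i) \<ge> l)}"

definition S_solvable :: "(nat \<Rightarrow> 'v::linorder set list) \<Rightarrow> (nat \<Rightarrow> 'a::comm_ring_1 mat) \<Rightarrow> nat \<Rightarrow> 'a vec \<Rightarrow> nat set \<Rightarrow> bool" where
  "S_solvable sl M d c I \<longleftrightarrow>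
     (\<exists>\<upsilon> \<in> carrier_vec (nU sl M d). \<exists>\<tau> \<in> carrier_vec (nT sl M d).
        \<forall>i\<in>I. (Ublk sl M d *\<^sub>v \<upsilon> + Tblk sl M d *\<^sub>v (Amat sl M d *\<^sub>v \<tau>)) $ i = - (c $ i))"

definition Hlevel :: "(nat \<Rightarrow> 'v::linorder set list) \<Rightarrow> (nat \<Rightarrow> 'a::comm_ring_1 mat) \<Rightarrow> ('v set \<Rightarrow> 'l::order)
    \<Rightarrow> nat \<Rightarrow> 'l \<Rightarrow> 'a vec set set" where
  "Hlevel sl M \<mu> d l = {X \<in> homology sl d. \<exists>h \<in> cycles sl d. X = hclass sl d h \<and> S_solvable sl M d h (Iset sl \<mu> d l)}"

definition hom_iso :: "(nat \<Rightarrow> 'v::linorder set list) \<Rightarrow> (nat \<Rightarrow> 'a::comm_ring_1 mat) \<Rightarrow> nat \<Rightarrow> 'a vec \<Rightarrow> 'a set vec \<times> 'a vec" where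
  "hom_iso sl M d z = (let c = (SOME c. c \<in> carrier_vec (nsimp sl d) \<and> M d *\<^sub>v c = z) in
     (vec (nT sl M d) (\<lambda>i. residue (tors_coeff sl M d i) (c $ (nU sl M d + i))),
      vec (nF sl M d) (\<lambda>i. c $ (nU sl M d + nT sl M d + nR sl M d + i))))"

end

theory Submission
  imports Defs
begin


lemma sum_single_nz:
  assumes "finite A" "a \<in> A" "\<And>b. b \<in> A \<Longrightarrow> b \<noteq> a \<Longrightarrow> f b = 0"
  shows "sum f A = f a"
proof -
  have "sum f A = f a + sum f (A - {a})" using assms by (simp add: sum.remove)
  also have "sum f (A - {a}) = 0" using assms by (intro sum.neutral) auto
  finally show ?thesis by simp
qed

lemma inv_ex:
  assumes "A \<in> carrier_mat n n" "invertible_mat A"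
  shows "\<exists>B \<in> carrier_mat n n. A * B = 1\<^sub>m n \<and> B * A = 1\<^sub>m n"
proof -
  from assms obtain B where B: "A * B = 1\<^sub>m (dim_row A)" "B * A = 1\<^sub>m (dim_row B)"
    unfolding invertible_mat_def inverts_mat_def by blast
  have "dim_col B = n" using B(1) assms(1) by (metis carrier_matD(1) index_mult_mat(3) index_one_mat(3))
  moreover have "dim_row B = n" using B(2) assms(1) by (metis carrier_matD(2) index_mult_mat(3) index_one_mat(3))
  ultimately show ?thesis using B assms(1) by (intro bexI[of _ B]) auto
qed

lemma inv_inj:
  assumes "A \<in> carrier_mat n n" "invertible_mat A" "x \<in> carrier_vec n" "y \<in> carrier_vec n"
    "A *\<^sub>v x = A *\<^sub>v y"
  shows "x = y"
proof -
  obtain B where B: "B \<in> carrier_mat n n" "B * A = 1\<^sub>m n" using inv_ex[OF assms(1,2)] by blast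
  have "x = (B * A) *\<^sub>v x" using B assms by simp
  also have "\<dots> = B *\<^sub>v (A *\<^sub>v x)" using B assms by (metis assoc_mult_mat_vec)
  also have "\<dots> = B *\<^sub>v (A *\<^sub>v y)" using assms by simp
  also have "\<dots> = (B * A) *\<^sub>v y" using B assms by (metis assoc_mult_mat_vec)
  also have "\<dots> = y" using B assms by simp
  finally show ?thesis .
qed

lemma inv_surj:
  assumes "A \<in> carrier_mat n n" "invertible_mat A" "z \<in> carrier_vec n"
  shows "\<exists>c \<in> carrier_vec n. A *\<^sub>v c = z"
proof -
  obtain B where B: "B \<in> carrier_mat n n" "A * B = 1\<^sub>m n" using inv_ex[OF assms(1,2)] by blast
  have "A *\<^sub>v (B *\<^sub>v z) = (A * B) *\<^sub>v z" using B assms by (metis assoc_mult_mat_vec)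
  also have "\<dots> = z" using B assms by simp
  finally show ?thesis using B assms by (intro bexI[of _ "B *\<^sub>v z"]) auto
qed

lemma diag_mult:
  assumes X: "X \<in> carrier_mat nr nc"
    and nz: "\<forall>i<nr. \<forall>j<nc. (X $$ (i,j) \<noteq> 0) = (i < q \<and> j = off + i)"
    and oq: "off + q \<le> nc" and c: "c \<in> carrier_vec nc" and i: "i < nr"
  shows "(X *\<^sub>v c) $ i = (if i < q then X $$ (i, off+i) * c $ (off+i) else 0)"
proof -
  have "(X *\<^sub>v c) $ i = (\<Sum>j\<in>{0..<nc}. X $$ (i,j) * c $ j)"
    using X c i by (simp add: scalar_prod_def)
  also have "\<dots> = (if i < q then X $$ (i, off+i) * c $ (off+i) else 0)"
  proof (cases "i < q")
    case True
    have z: "X $$ (i, b) * c $ b = 0" if "b < nc" "b \<noteq> off + i" for b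
    proof -
      have "X $$ (i, b) = 0" using nz i that by blast
      then show ?thesis by simp
    qed
    show ?thesis using True z i oq by (subst sum_single_nz[where a="off+i"]) auto
  next
    case False
    then show ?thesis using nz i by (intro trans[OF sum.neutral]) auto
  qed
  finally show ?thesis .
qed

lemma reindex_mult:
  assumes A: "A \<in> carrier_mat nr N" and inj: "inj_on g {..<K}" and gN: "\<forall>j<K. g j < N"
    and e: "e \<in> carrier_vec N" and eg: "\<forall>j<K. e $ (g j) = w $ j"
    and e0: "\<forall>j<N. j \<notin> g ` {..<K} \<longrightarrow> e $ j = 0" and w: "w \<in> carrier_vec K"
  shows "mat nr K (\<lambda>(i,j). A $$ (i, g j)) *\<^sub>v w = A *\<^sub>v e"
proof (rule eq_vecI)
  show "dim_vec (mat nr K (\<lambda>(i,j). A $$ (i, g j)) *\<^sub>v w) = dim_vec (A *\<^sub>v e)" using A by simp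
  fix i assume "i < dim_vec (A *\<^sub>v e)"
  then have i: "i < nr" using A by simp
  have "(mat nr K (\<lambda>(i,j). A $$ (i, g j)) *\<^sub>v w) $ i = (\<Sum>j\<in>{..<K}. A $$ (i, g j) * e $ (g j))"
    using i w eg by (simp add: scalar_prod_def atLeast0LessThan)
  also have "\<dots> = (\<Sum>x\<in>g ` {..<K}. A $$ (i, x) * e $ x)"
    using sum.reindex[OF inj, of "\<lambda>x. A $$ (i, x) * e $ x"] by simp
  also have "\<dots> = (\<Sum>x\<in>{..<N}. A $$ (i, x) * e $ x)"
    using gN e0 by (intro sum.mono_neutral_left) auto
  also have "\<dots> = (A *\<^sub>v e) $ i" using i A e by (simp add: scalar_prod_def atLeast0LessThan)
  finally show "(mat nr K (\<lambda>(i,j). A $$ (i, g j)) *\<^sub>v w) $ i = (A *\<^sub>v e) $ i" .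
qed



lemma downward_prefix:
  fixes S :: "nat set"
  assumes "S \<subseteq> {..<N}" "\<And>i j. j \<in> S \<Longrightarrow> i \<le> j \<Longrightarrow> i \<in> S"
  shows "S = {..<card S}"
proof (cases "S = {}")
  case True then show ?thesis by simp
next
  case False
  have fin: "finite S" using assms(1) finite_subset by blast
  let ?m = "Max S"
  have "?m \<in> S" using fin False by simp
  have "S = {..?m}"
  proof
    show "S \<subseteq> {..?m}" using fin by auto
    show "{..?m} \<subseteq> S" using assms(2) \<open>?m \<in> S\<close> by auto
  qed
  then show ?thesis by (metis card_atMost lessThan_Suc_atMost)
qed

lemma red_mat_Suc:
  fixes M :: "nat \<Rightarrow> 'a::comm_ring_1 mat"
  assumes Minv: "\<And>e. M e \<in> carrier_mat (nsimp sl e) (nsimp sl e) \<and> invertible_mat (M e)"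
  shows "red_mat sl M (Suc e) \<in> carrier_mat (nsimp sl e) (nsimp sl (Suc e)) \<and>
         M e * red_mat sl M (Suc e) = bdry_mat sl (Suc e) * M (Suc e)"
proof -
  let ?n = "nsimp sl e" and ?m = "nsimp sl (Suc e)"
  have V: "M e \<in> carrier_mat ?n ?n" "invertible_mat (M e)" using Minv by auto
  have Dex: "\<exists>X. X \<in> carrier_mat ?n ?m \<and> M e * X = bdry_mat sl (Suc e) * M (Suc e)"
  proof -
    obtain B where B: "B \<in> carrier_mat ?n ?n" "M e * B = 1\<^sub>m ?n" using inv_ex[OF V] by blast
    define X where "X = B * (bdry_mat sl (Suc e) * M (Suc e))"
    have bd: "bdry_mat sl (Suc e) \<in> carrier_mat ?n ?m" unfolding bdry_mat_def by simp
    have M1: "M (Suc e) \<in> carrier_mat ?m ?m" using Minv by blast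
    have "M e * X = (M e * B) * (bdry_mat sl (Suc e) * M (Suc e))" unfolding X_def
      using B V bd M1 by (metis assoc_mult_mat mult_carrier_mat)
    with B(2) have "M e * X = bdry_mat sl (Suc e) * M (Suc e)" using bd M1
      by (metis left_mult_one_mat mult_carrier_mat)
    moreover have "X \<in> carrier_mat ?n ?m" unfolding X_def using B bd M1 by (meson mult_carrier_mat)
    ultimately show ?thesis by blast
  qed
  show ?thesis using someI_ex[OF Dex] unfolding red_mat_def by auto
qed

lemma col_block_mult:
  assumes A: "A \<in> carrier_mat nr N" and le: "off + K \<le> N" and v: "v \<in> carrier_vec K"
  shows "col_block A off K *\<^sub>v v = A *\<^sub>v vec N (\<lambda>j. if off \<le> j \<and> j < off + K then v $ (j - off) else 0)"
proof -
  have "col_block A off K = mat nr K (\<lambda>(i,j). A $$ (i, (\<lambda>j. off + j) j))"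
    unfolding col_block_def using A by simp
  also have "\<dots> *\<^sub>v v = A *\<^sub>v vec N (\<lambda>j. if off \<le> j \<and> j < off + K then v $ (j - off) else 0)"
  proof (rule reindex_mult[OF A])
    show "inj_on (\<lambda>j. off + j) {..<K}" by (auto simp: inj_on_def)
    show "\<forall>j<K. off + j < N" using le by auto
    show "\<forall>j<N. j \<notin> (\<lambda>j. off + j) ` {..<K} \<longrightarrow> vec N (\<lambda>j. if off \<le> j \<and> j < off + K then v $ (j - off) else 0) $ j = 0"
    proof (intro allI impI)
      fix j assume "j < N" "j \<notin> (\<lambda>j. off + j) ` {..<K}"
      moreover have "off \<le> j \<and> j < off + K \<Longrightarrow> j \<in> (\<lambda>j. off + j) ` {..<K}"
        by (rule image_eqI[of _ _ "j - off"]) auto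
      ultimately show "vec N (\<lambda>j. if off \<le> j \<and> j < off + K then v $ (j - off) else 0) $ j = 0" by auto
    qed
  qed (use le v in auto)
  finally show ?thesis .
qed

lemma submat_row:
  assumes I: "I \<subseteq> {..<dim_row G}" and i': "i' < dim_row (submatrix G I UNIV)"
  shows "pick I i' \<in> I" "row (submatrix G I UNIV) i' = row G (pick I i')"
proof -
  have cI: "{i. i < dim_row G \<and> i \<in> I} = I" using I by auto
  have dc: "{j. j < dim_col G \<and> j \<in> UNIV} = {..<dim_col G}" by auto
  have i'': "i' < card I" using i' cI by (simp add: dim_submatrix)
  show "pick I i' \<in> I" using pick_in_set_le[OF i''] .
  show "row (submatrix G I UNIV) i' = row G (pick I i')"
  proof (rule eq_vecI)
    show "dim_vec (row (submatrix G I UNIV) i') = dim_vec (row G (pick I i'))"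
      by (simp add: dim_submatrix dc)
    fix j assume "j < dim_vec (row G (pick I i'))"
    then have j: "j < dim_col G" by simp
    show "row (submatrix G I UNIV) i' $ j = row G (pick I i') $ j"
    proof -
      have "pick I i' < dim_row G" using pick_in_set_le[OF i''] I by auto
      then show ?thesis using submatrix_index[of i' G I j UNIV] i' j cI dc
        by (simp add: dim_submatrix pick_UNIV)
    qed
  qed
qed

lemma kernel_rows:
  assumes I: "I \<subseteq> {..<dim_row G}" and v: "v \<in> mat_kernel (submatrix G I UNIV)" and i: "i \<in> I"
  shows "(G *\<^sub>v v) $ i = 0"
proof -
  have cI: "{i. i < dim_row G \<and> i \<in> I} = I" using I by auto
  have fin: "finite I" using I finite_subset by blast
  define i' where "i' = card {a\<in>I. a < i}"
  have "{a\<in>I. a < i} \<subset> I" using i by auto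
  then have "i' < card I" unfolding i'_def using fin by (simp add: psubset_card_mono)
  then have i': "i' < dim_row (submatrix G I UNIV)" using cI by (simp add: dim_submatrix)
  have pk: "pick I i' = i" unfolding i'_def using pick_card_in_set[OF i] .
  have "(submatrix G I UNIV *\<^sub>v v) $ i' = 0" using v i' unfolding mat_kernel_def by auto
  moreover have "(submatrix G I UNIV *\<^sub>v v) $ i' = row (submatrix G I UNIV) i' \<bullet> v"
    using i' by simp
  moreover have "(G *\<^sub>v v) $ i = row G i \<bullet> v" using i I by auto
  ultimately show ?thesis using submat_row(2)[OF I i'] pk by simp
qed

lemma kernel_rowsI:
  assumes I: "I \<subseteq> {..<dim_row G}" and v: "v \<in> carrier_vec (dim_col G)"
    and z: "\<And>i. i \<in> I \<Longrightarrow> (G *\<^sub>v v) $ i = 0"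
  shows "v \<in> mat_kernel (submatrix G I UNIV)"
proof -
  have dc: "{j. j < dim_col G \<and> j \<in> UNIV} = {..<dim_col G}" by auto
  have "submatrix G I UNIV *\<^sub>v v = 0\<^sub>v (dim_row (submatrix G I UNIV))"
  proof (rule eq_vecI)
    fix i' assume "i' < dim_vec (0\<^sub>v (dim_row (submatrix G I UNIV)) :: 'a vec)"
    then have i': "i' < dim_row (submatrix G I UNIV)" by simp
    show "(submatrix G I UNIV *\<^sub>v v) $ i' = 0\<^sub>v (dim_row (submatrix G I UNIV)) $ i'"
      using submat_row[OF I i'] z[of "pick I i'"] i' I by auto
  qed simp
  moreover have "v \<in> carrier_vec (dim_col (submatrix G I UNIV))" using v by (simp add: dim_submatrix dc)
  ultimately show ?thesis unfolding mat_kernel_def by simp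
qed

lemma hclass_shift:
  fixes h :: "'a::comm_ring_1 vec"
  assumes h: "h \<in> carrier_vec (nsimp sl d)" and b: "b \<in> boundaries sl d"
  shows "hclass sl d (h + b) = hclass sl d h"
proof -
  let ?n = "nsimp sl d" and ?m = "nsimp sl (Suc d)"
  have bd: "(bdry_mat sl (Suc d) :: 'a mat) \<in> carrier_mat ?n ?m" unfolding bdry_mat_def by simp
  obtain c where c: "c \<in> carrier_vec ?m" "b = bdry_mat sl (Suc d) *\<^sub>v c" using b unfolding boundaries_def by blast
  have bc: "b \<in> carrier_vec ?n" unfolding c(2) using c(1) bd by (rule mult_mat_vec_carrier[rotated])
  show ?thesis
  proof
    show "hclass sl d (h + b) \<subseteq> hclass sl d h"
    proof
      fix x assume "x \<in> hclass sl d (h + b)"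
      then obtain b' where b': "b' \<in> boundaries sl d" "x = h + b + b'" unfolding hclass_def by blast
      obtain c' where c': "c' \<in> carrier_vec ?m" "b' = bdry_mat sl (Suc d) *\<^sub>v c'" using b'(1) unfolding boundaries_def by blast
      have "b + b' = bdry_mat sl (Suc d) *\<^sub>v (c + c')" unfolding c(2) c'(2) by (rule mult_add_distrib_mat_vec[OF bd c(1) c'(1), symmetric])
      moreover have "c + c' \<in> carrier_vec ?m" using c(1) c'(1) by simp
      ultimately have B1: "b + b' \<in> boundaries sl d" unfolding boundaries_def by blast
      have b'c: "b' \<in> carrier_vec ?n" unfolding c'(2) using c'(1) bd by (rule mult_mat_vec_carrier[rotated])
      have X1: "x = h + (b + b')" using b'(2) assoc_add_vec[OF h bc b'c] by simp
      show "x \<in> hclass sl d h" unfolding hclass_def using B1 X1 by blast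
    qed
    show "hclass sl d h \<subseteq> hclass sl d (h + b)"
    proof
      fix x assume "x \<in> hclass sl d h"
      then obtain b' where b': "b' \<in> boundaries sl d" "x = h + b'" unfolding hclass_def by blast
      obtain c' where c': "c' \<in> carrier_vec ?m" "b' = bdry_mat sl (Suc d) *\<^sub>v c'" using b'(1) unfolding boundaries_def by blast
      have "b' - b = bdry_mat sl (Suc d) *\<^sub>v (c' - c)" unfolding c(2) c'(2) by (rule mult_minus_distrib_mat_vec[OF bd c'(1) c(1), symmetric])
      moreover have "c' - c \<in> carrier_vec ?m" using c(1) c'(1) by simp
      ultimately have B1: "b' - b \<in> boundaries sl d" unfolding boundaries_def by blast
      have b'c: "b' \<in> carrier_vec ?n" unfolding c'(2) using c'(1) bd by (rule mult_mat_vec_carrier[rotated])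
      have E1: "(h + b) + (b' - b) = h + b'"
      proof (rule eq_vecI)
        fix i assume "i < dim_vec (h + b')"
        then have i: "i < ?n" using h b'c by simp
        show "(h + b + (b' - b)) $ i = (h + b') $ i" using i h bc b'c by simp
      qed (use h bc b'c in simp)
      have X1: "x = (h + b) + (b' - b)" using b'(2) E1 by simp
      show "x \<in> hclass sl d (h + b)" unfolding hclass_def using B1 X1 by blast
    qed
  qed
qed



theorem mainTheorem17:
  fixes K :: "'v::linorder set set"
    and \<mu> :: "'v set \<Rightarrow> 'l::complete_distrib_lattice"
    and sl :: "nat \<Rightarrow> 'v set list"
    and M :: "nat \<Rightarrow> 'a::idom mat"
    and d :: nat and l :: 'l
  assumes "is_PID TYPE('a)"
    and "simplicial_complex K"
    and "fuzzy_subcomplex K \<mu>"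
    and "enumeration K sl"
    and "reduced_bases sl M"
  shows "Hlevel sl M \<mu> d l =
           {hclass sl d z | z \<upsilon> \<tau> \<phi>. z \<in> cycles sl d \<and>
              \<upsilon> \<in> carrier_vec (nU sl M d) \<and> \<tau> \<in> carrier_vec (nT sl M d) \<and> \<phi> \<in> carrier_vec (nF sl M d) \<and>
              z = Ublk sl M d *\<^sub>v \<upsilon> + Tblk sl M d *\<^sub>v \<tau> + Fblk sl M d *\<^sub>v \<phi> \<and>
              (\<upsilon> @\<^sub>v \<tau> @\<^sub>v \<phi>) \<in> mat_kernel (submatrix (Gmat sl M d) (Iset sl \<mu> d l) UNIV)}
       \<and> (\<forall>z \<upsilon> \<tau> \<phi>. z \<in> cycles sl d \<and>
              \<upsilon> \<in> carrier_vec (nU sl M d) \<and> \<tau> \<in> carrier_vec (nT sl M d) \<and> \<phi> \<in> carrier_vec (nF sl M d) \<and>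
              z = Ublk sl M d *\<^sub>v \<upsilon> + Tblk sl M d *\<^sub>v \<tau> + Fblk sl M d *\<^sub>v \<phi> \<longrightarrow>
              hom_iso sl M d z = (vec (nT sl M d) (\<lambda>i. residue (tors_coeff sl M d i) (\<tau> $ i)), \<phi>))"
proof -
  have RB: "reduced_bases sl M" using assms(5) .
  define n where "n = nsimp sl d"
  define m where "m = nsimp sl (Suc d)"
  define D where "D = red_mat sl M (Suc d)"
  define E where "E = red_mat sl M d"
  define V where "V = M d"
  have Minv: "\<And>e. M e \<in> carrier_mat (nsimp sl e) (nsimp sl e) \<and> invertible_mat (M e)"
    using RB unfolding reduced_bases_def by blast
  obtain r where r: "\<And>e. r (Suc e) + r e \<le> nsimp sl e \<and> r e \<le> dim_row (red_mat sl M e) \<and>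
        (\<forall>i < dim_row (red_mat sl M e). \<forall>j < dim_col (red_mat sl M e).
           red_mat sl M e $$ (i, j) \<noteq> 0 \<longleftrightarrow> (i < r e \<and> j = r (Suc e) + i)) \<and>
        (\<forall>i. Suc i < r e \<longrightarrow>
           red_mat sl M e $$ (i, r (Suc e) + i) dvd red_mat sl M e $$ (Suc i, r (Suc e) + Suc i))"
    using RB unfolding reduced_bases_def by blast
  define p where "p = r (Suc d)"
  define q where "q = r d"
  define s where "s = r (Suc (Suc d))"
  define a where "a = (\<lambda>j. D $$ (j, s + j))"
  have V: "V \<in> carrier_mat n n" "invertible_mat V" using Minv unfolding V_def n_def by auto
  have D: "D \<in> carrier_mat n m" "V * D = bdry_mat sl (Suc d) * M (Suc d)"
    using red_mat_Suc[where M=M and sl=sl, OF Minv, of d] unfolding D_def V_def n_def m_def by auto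
  have M1: "M (Suc d) \<in> carrier_mat m m" using Minv unfolding m_def by blast
  have bdS: "bdry_mat sl (Suc d) \<in> carrier_mat n m" unfolding bdry_mat_def n_def m_def by simp
  have rS: "s + p \<le> m \<and> p \<le> n \<and> (\<forall>i<n. \<forall>j<m. D $$ (i,j) \<noteq> 0 \<longleftrightarrow> (i < p \<and> j = s + i))
       \<and> (\<forall>i. Suc i < p \<longrightarrow> a i dvd a (Suc i))"
    using r[of "Suc d"] D(1) unfolding s_def p_def m_def n_def a_def D_def by auto
  have Dnz: "\<And>i j. i < n \<Longrightarrow> j < m \<Longrightarrow> D $$ (i,j) \<noteq> 0 \<longleftrightarrow> (i < p \<and> j = s + i)"
    using rS by blast
  have sp: "s + p \<le> m" and pn: "p \<le> n" using rS by auto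
  have chain: "\<And>i. Suc i < p \<Longrightarrow> a i dvd a (Suc i)" using rS by blast
  have anz: "\<And>i. i < p \<Longrightarrow> a i \<noteq> 0" using Dnz sp pn unfolding a_def by auto
  have Edim: "dim_col E = n"
  proof (cases d)
    case 0 then show ?thesis unfolding E_def n_def red_mat_def by simp
  next
    case (Suc d') then show ?thesis using red_mat_Suc[where M=M and sl=sl, OF Minv, of d']
      unfolding E_def n_def by auto
  qed
  have Erel: "d > 0 \<Longrightarrow> E \<in> carrier_mat (nsimp sl (d-1)) n \<and> M (d-1) * E = bdry_mat sl d * V"
  proof -
    assume "d > 0"
    then obtain d' where d': "d = Suc d'" using gr0_implies_Suc by blast
    show ?thesis using red_mat_Suc[where M=M and sl=sl, OF Minv, of d']
      unfolding E_def n_def V_def d' by auto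
  qed
  have E0: "d = 0 \<Longrightarrow> dim_row E = 0" unfolding E_def red_mat_def by simp
  have rd: "p + q \<le> n \<and> q \<le> dim_row E \<and> (\<forall>i<dim_row E. \<forall>j<n. E $$ (i,j) \<noteq> 0 \<longleftrightarrow> (i < q \<and> j = p + i))"
    using r[of d] Edim unfolding q_def p_def n_def E_def by auto
  have pq: "p + q \<le> n" and qE: "q \<le> dim_row E" using rd by auto
  have Enz: "\<And>i j. i < dim_row E \<Longrightarrow> j < n \<Longrightarrow> E $$ (i,j) \<noteq> 0 \<longleftrightarrow> (i < q \<and> j = p + i)"
    using rd by blast
  have cyc_iff: "V *\<^sub>v c \<in> cycles sl d \<longleftrightarrow> (\<forall>i<q. c $ (p+i) = 0)" if c: "c \<in> carrier_vec n" for c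
  proof (cases "d = 0")
    case True
    then have "q = 0" using qE E0 by simp
    moreover have "V *\<^sub>v c \<in> cycles sl d" unfolding cycles_def using True V c
      by (auto simp: bdry_mat_def n_def)
    ultimately show ?thesis by simp
  next
    case False
    define P where "P = M (d-1)"
    define k' where "k' = nsimp sl (d-1)"
    have P: "P \<in> carrier_mat k' k'" "invertible_mat P" using Minv unfolding P_def k'_def by auto
    have Ec: "E \<in> carrier_mat k' n" "P * E = bdry_mat sl d * V" using Erel False unfolding P_def k'_def by auto
    have bd: "bdry_mat sl d \<in> carrier_mat k' n" using False unfolding bdry_mat_def k'_def n_def by simp
    have "bdry_mat sl d *\<^sub>v (V *\<^sub>v c) = P *\<^sub>v (E *\<^sub>v c)"
      using Ec bd V c P by (metis assoc_mult_mat_vec)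
    moreover have "P *\<^sub>v (E *\<^sub>v c) = 0\<^sub>v k' \<longleftrightarrow> E *\<^sub>v c = 0\<^sub>v k'"
    proof
      assume h: "P *\<^sub>v (E *\<^sub>v c) = 0\<^sub>v k'"
      have "P *\<^sub>v 0\<^sub>v k' = 0\<^sub>v k'" using P by (intro eq_vecI) auto
      then show "E *\<^sub>v c = 0\<^sub>v k'" using inv_inj[OF P, of "E *\<^sub>v c" "0\<^sub>v k'"] h Ec c by auto
    next
      assume "E *\<^sub>v c = 0\<^sub>v k'"
      then show "P *\<^sub>v (E *\<^sub>v c) = 0\<^sub>v k'" using P by (intro eq_vecI) auto
    qed
    moreover have "E *\<^sub>v c = 0\<^sub>v k' \<longleftrightarrow> (\<forall>i<q. c $ (p+i) = 0)"
    proof -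
      have ent: "\<And>i. i < k' \<Longrightarrow> (E *\<^sub>v c) $ i = (if i < q then E $$ (i, p+i) * c $ (p+i) else 0)"
        using diag_mult[OF Ec(1) _ pq c] Enz Ec(1) by auto
      have Enz': "\<And>i. i < q \<Longrightarrow> E $$ (i, p+i) \<noteq> 0" using Enz qE pq by auto
      show ?thesis
      proof
        assume h: "E *\<^sub>v c = 0\<^sub>v k'"
        show "\<forall>i<q. c $ (p+i) = 0"
        proof (intro allI impI)
          fix i assume i: "i < q"
          then have "i < k'" using qE Ec by auto
          then have "(E *\<^sub>v c) $ i = 0" using h by simp
          then show "c $ (p+i) = 0" using ent[OF \<open>i < k'\<close>] i Enz'[OF i] by simp
        qed
      next
        assume h: "\<forall>i<q. c $ (p+i) = 0"
        show "E *\<^sub>v c = 0\<^sub>v k'" using ent h Ec by (intro eq_vecI) auto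
      qed
    qed
    ultimately show ?thesis unfolding cycles_def using c V bd by (auto simp: n_def)
  qed
  have cz: "col_zero sl M d j \<longleftrightarrow> \<not> (p \<le> j \<and> j < p + q)" if j: "j < n" for j
  proof -
    have "col_zero sl M d j \<longleftrightarrow> (\<forall>i<dim_row E. E $$ (i,j) = 0)"
      unfolding col_zero_def E_def by simp
    also have "\<dots> \<longleftrightarrow> \<not> (p \<le> j \<and> j < p + q)"
    proof
      assume h: "\<forall>i<dim_row E. E $$ (i,j) = 0"
      show "\<not> (p \<le> j \<and> j < p + q)"
      proof
        assume "p \<le> j \<and> j < p + q"
        then have "j - p < q" "j = p + (j - p)" by auto
        then have "E $$ (j-p, j) \<noteq> 0" using Enz[of "j-p" j] qE j by auto
        then show False using h qE \<open>j - p < q\<close> by auto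
      qed
    next
      assume "\<not> (p \<le> j \<and> j < p + q)"
      then show "\<forall>i<dim_row E. E $$ (i,j) = 0" using Enz j by force
    qed
    finally show ?thesis .
  qed
  have re: "row_entries sl M d j = {D $$ (j,t) | t. t < m}" for j
    unfolding row_entries_def D_def[symmetric] using D(1) by simp
  have re_nz: "j < p \<and> x = a j" if "j < n" "x \<in> row_entries sl M d j" "x \<noteq> 0" for j x
    using that Dnz unfolding re a_def by auto
  have re_a: "a j \<in> row_entries sl M d j" if "j < p" for j
    using that sp unfolding re a_def by auto
  have re_z: "x = 0" if "j < n" "\<not> j < p" "x \<in> row_entries sl M d j" for j x
    using that re_nz by blast
  define k where "k = card {j. j < p \<and> a j dvd 1}"
  have Useq: "{j. j < p \<and> a j dvd 1} = {..<k}"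
    unfolding k_def
  proof (rule downward_prefix[of _ p])
    show "{j. j < p \<and> a j dvd 1} \<subseteq> {..<p}" by auto
    have step: "\<forall>i. i + t \<in> {j. j < p \<and> a j dvd 1} \<longrightarrow> i \<in> {j. j < p \<and> a j dvd 1}" for t
    proof (induction t)
      case 0 then show ?case by simp
    next
      case (Suc t)
      show ?case
      proof (intro allI impI)
        fix i assume h: "i + Suc t \<in> {j. j < p \<and> a j dvd 1}"
        then have "a (i + t) dvd a (Suc (i + t))" using chain by auto
        then have "i + t \<in> {j. j < p \<and> a j dvd 1}" using h dvd_trans by auto
        then show "i \<in> {j. j < p \<and> a j dvd 1}" using Suc by blast
      qed
    qed
    fix i j assume H: "j \<in> {j. j < p \<and> a j dvd 1}" "i \<le> j"
    then have "i + (j - i) \<in> {j. j < p \<and> a j dvd 1}" by simp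
    then show "i \<in> {j. j < p \<and> a j dvd 1}" by (rule step[of "j - i", rule_format])
  qed
  have kp: "k \<le> p"
  proof (rule ccontr)
    assume "\<not> k \<le> p"
    then have "p \<in> {..<k}" by auto
    then show False using Useq by blast
  qed
  have unit_iff: "a j dvd 1 \<longleftrightarrow> j < k" if "j < p" for j
    using Useq that by blast
  have a1: "\<not> (0::'a) dvd 1" by simp
  have tU: "typeU sl M d j \<longleftrightarrow> j < k" if j: "j < n" for j
  proof
    assume "typeU sl M d j"
    then obtain x where x: "x \<in> row_entries sl M d j" "x dvd 1" unfolding typeU_def by blast
    have "x \<noteq> 0" using a1 x(2) by metis
    then have jx: "j < p" "x = a j" using re_nz[OF j x(1)] by auto
    then have "a j dvd 1" using x(2) by simp
    then show "j < k" using unit_iff[OF jx(1)] by simp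
  next
    assume "j < k"
    then have jp: "j < p" using kp by simp
    have "a j dvd 1" using unit_iff[OF jp] \<open>j < k\<close> by simp
    moreover have "col_zero sl M d j" using cz[OF j] jp by simp
    ultimately show "typeU sl M d j" unfolding typeU_def using re_a[OF jp] by blast
  qed
  have tT: "typeT sl M d j \<longleftrightarrow> k \<le> j \<and> j < p" if j: "j < n" for j
  proof
    assume "typeT sl M d j"
    then obtain x where x: "x \<in> row_entries sl M d j" "x \<noteq> 0" "\<not> x dvd 1" unfolding typeT_def by blast
    then have jx: "j < p" "x = a j" using re_nz[OF j x(1)] by auto
    then have "\<not> a j dvd 1" using x(3) by simp
    then show "k \<le> j \<and> j < p" using unit_iff[OF jx(1)] jx(1) by simp
  next
    assume h: "k \<le> j \<and> j < p"
    have "\<not> a j dvd 1" using unit_iff[of j] h by simp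
    moreover have "col_zero sl M d j" using cz[OF j] h by simp
    ultimately show "typeT sl M d j" unfolding typeT_def using re_a[of j] anz[of j] h by blast
  qed
  have tR: "typeR sl M d j \<longleftrightarrow> p \<le> j \<and> j < p + q" if j: "j < n" for j
    unfolding typeR_def using cz[OF j] by simp
  have tF: "typeF sl M d j \<longleftrightarrow> p + q \<le> j" if j: "j < n" for j
  proof
    assume "typeF sl M d j"
    then have "col_zero sl M d j" "\<forall>x\<in>row_entries sl M d j. x = 0" unfolding typeF_def by auto
    then show "p + q \<le> j" using cz[OF j] re_a anz by (metis le_add1 linorder_not_le order_trans)
  next
    assume h: "p + q \<le> j"
    then show "typeF sl M d j" unfolding typeF_def using cz[OF j] re_z[OF j] by auto
  qed
  have nU: "nU sl M d = k"
  proof -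
    have "{j. j < nsimp sl d \<and> typeU sl M d j} = {..<k}" using tU kp pn unfolding n_def by auto
    then show ?thesis unfolding nU_def by simp
  qed
  have nT: "nT sl M d = p - k"
  proof -
    have "{j. j < nsimp sl d \<and> typeT sl M d j} = {k..<p}" using tT kp pn unfolding n_def by auto
    then show ?thesis unfolding nT_def by simp
  qed
  have nR: "nR sl M d = q"
  proof -
    have "{j. j < nsimp sl d \<and> typeR sl M d j} = {p..<p+q}" using tR pq unfolding n_def by auto
    then show ?thesis unfolding nR_def by simp
  qed
  have nF: "nF sl M d = n - (p + q)"
  proof -
    have "{j. j < nsimp sl d \<and> typeF sl M d j} = {p+q..<n}" using tF pq unfolding n_def by auto
    then show ?thesis unfolding nF_def n_def by simp
  qed
  have tors: "tors_coeff sl M d i = a (k + i)" if i: "i < p - k" for i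
    unfolding tors_coeff_def nU
  proof (rule some_equality)
    show "a (k + i) \<in> row_entries sl M d (k + i) \<and> a (k + i) \<noteq> 0" using re_a anz i by auto
    fix x assume "x \<in> row_entries sl M d (k + i) \<and> x \<noteq> 0"
    then show "x = a (k + i)" using re_nz[of "k+i" x] i pn by auto
  qed
  define emb where "emb = (\<lambda>(\<upsilon>::'a vec) (\<tau>::'a vec) (\<phi>::'a vec). vec n (\<lambda>j. if j < k then \<upsilon> $ j else if j < p then \<tau> $ (j - k)
      else if j < p + q then 0 else \<phi> $ (j - (p + q))))"
  have embc: "emb \<upsilon> \<tau> \<phi> \<in> carrier_vec n" for \<upsilon> \<tau> \<phi> unfolding emb_def by simp
  have Z: "Ublk sl M d *\<^sub>v \<upsilon> + Tblk sl M d *\<^sub>v \<tau> + Fblk sl M d *\<^sub>v \<phi> = V *\<^sub>v emb \<upsilon> \<tau> \<phi>"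
    if cv: "\<upsilon> \<in> carrier_vec k" "\<tau> \<in> carrier_vec (p - k)" "\<phi> \<in> carrier_vec (n - (p + q))" for \<upsilon> \<tau> \<phi>
  proof -
    define e1 where "e1 = vec n (\<lambda>j. if 0 \<le> j \<and> j < 0 + k then \<upsilon> $ (j - 0) else 0)"
    define e2 where "e2 = vec n (\<lambda>j. if k \<le> j \<and> j < k + (p - k) then \<tau> $ (j - k) else 0)"
    define e3 where "e3 = vec n (\<lambda>j. if p + q \<le> j \<and> j < p + q + (n - (p + q)) then \<phi> $ (j - (p + q)) else 0)"
    have U: "Ublk sl M d *\<^sub>v \<upsilon> = V *\<^sub>v e1"
      unfolding Ublk_def nU V_def[symmetric] e1_def by (rule col_block_mult[OF V(1)]) (use kp pn cv in auto)
    have T: "Tblk sl M d *\<^sub>v \<tau> = V *\<^sub>v e2"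
      unfolding Tblk_def nU nT V_def[symmetric] e2_def by (rule col_block_mult[OF V(1)]) (use kp pn cv in auto)
    have kk: "k + (p - k) + q = p + q" using kp by simp
    have F: "Fblk sl M d *\<^sub>v \<phi> = V *\<^sub>v e3"
      unfolding Fblk_def nU nT nR nF V_def[symmetric] e3_def kk by (rule col_block_mult[OF V(1)]) (use pq cv in auto)
    have "V *\<^sub>v e1 + V *\<^sub>v e2 + V *\<^sub>v e3 = V *\<^sub>v (e1 + e2 + e3)"
    proof -
      have c: "e1 \<in> carrier_vec n" "e2 \<in> carrier_vec n" "e3 \<in> carrier_vec n"
        unfolding e1_def e2_def e3_def by auto
      have "V *\<^sub>v (e1 + e2 + e3) = V *\<^sub>v (e1 + e2) + V *\<^sub>v e3"
        using c by (intro mult_add_distrib_mat_vec[OF V(1)]) auto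
      also have "V *\<^sub>v (e1 + e2) = V *\<^sub>v e1 + V *\<^sub>v e2"
        using c by (intro mult_add_distrib_mat_vec[OF V(1)]) auto
      finally show ?thesis by simp
    qed
    moreover have "e1 + e2 + e3 = emb \<upsilon> \<tau> \<phi>"
      unfolding e1_def e2_def e3_def emb_def using kp pq by (intro eq_vecI) auto
    ultimately show ?thesis using U T F by simp
  qed
  have Gm: "Gmat sl M d *\<^sub>v (\<upsilon> @\<^sub>v \<tau> @\<^sub>v \<phi>) = V *\<^sub>v emb \<upsilon> \<tau> \<phi>"
    if cv: "\<upsilon> \<in> carrier_vec k" "\<tau> \<in> carrier_vec (p - k)" "\<phi> \<in> carrier_vec (n - (p + q))" for \<upsilon> \<tau> \<phi>
  proof -
    define g where "g = (\<lambda>j::nat. if j < p then j else j + q)"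
    have Geq: "Gmat sl M d = mat n (p + (n - (p + q))) (\<lambda>(i,j). V $$ (i, g j))"
      unfolding Gmat_def nU nT nR nF g_def n_def[symmetric] V_def[symmetric] using kp
      by (intro eq_matI) auto
    show ?thesis unfolding Geq
    proof (rule reindex_mult[OF V(1)])
      show "inj_on g {..<p + (n - (p + q))}" unfolding g_def by (auto simp: inj_on_def split: if_splits)
      show "\<forall>j<p + (n - (p + q)). g j < n" unfolding g_def using pq by auto
      show "emb \<upsilon> \<tau> \<phi> \<in> carrier_vec n" by (rule embc)
      show "\<forall>j<p + (n - (p + q)). emb \<upsilon> \<tau> \<phi> $ g j = (\<upsilon> @\<^sub>v \<tau> @\<^sub>v \<phi>) $ j"
        unfolding g_def emb_def using cv kp pq by auto
      show "\<forall>j<n. j \<notin> g ` {..<p + (n - (p + q))} \<longrightarrow> emb \<upsilon> \<tau> \<phi> $ j = 0"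
      proof (intro allI impI)
        fix j assume j: "j < n" "j \<notin> g ` {..<p + (n - (p + q))}"
        have "j < p \<Longrightarrow> j \<in> g ` {..<p + (n - (p + q))}" unfolding g_def
          by (rule image_eqI[of _ _ j]) auto
        moreover have "p + q \<le> j \<Longrightarrow> j \<in> g ` {..<p + (n - (p + q))}" unfolding g_def
          using j(1) by (intro image_eqI[of _ _ "j - q"]) auto
        ultimately show "emb \<upsilon> \<tau> \<phi> $ j = 0" using j kp unfolding emb_def by auto
      qed
      have "\<upsilon> @\<^sub>v \<tau> @\<^sub>v \<phi> \<in> carrier_vec (k + ((p - k) + (n - (p + q))))"
        using cv by (intro append_carrier_vec) auto
      then show "\<upsilon> @\<^sub>v \<tau> @\<^sub>v \<phi> \<in> carrier_vec (p + (n - (p + q)))" using kp by simp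
    qed
  qed
  have cvs: "\<upsilon> \<in> carrier_vec k" "\<tau> \<in> carrier_vec (p - k)" "\<phi> \<in> carrier_vec (n - (p + q))"
    if "\<upsilon> \<in> carrier_vec (nU sl M d)" "\<tau> \<in> carrier_vec (nT sl M d)" "\<phi> \<in> carrier_vec (nF sl M d)"
    for \<upsilon> \<tau> \<phi> using that unfolding nU nT nF by auto
  have part2: "\<forall>z \<upsilon> \<tau> \<phi>. z \<in> cycles sl d \<and>
              \<upsilon> \<in> carrier_vec (nU sl M d) \<and> \<tau> \<in> carrier_vec (nT sl M d) \<and> \<phi> \<in> carrier_vec (nF sl M d) \<and>
              z = Ublk sl M d *\<^sub>v \<upsilon> + Tblk sl M d *\<^sub>v \<tau> + Fblk sl M d *\<^sub>v \<phi> \<longrightarrow>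
              hom_iso sl M d z = (vec (nT sl M d) (\<lambda>i. residue (tors_coeff sl M d i) (\<tau> $ i)), \<phi>)"
  proof (intro allI impI)
    fix z \<upsilon> \<tau> \<phi>
    assume H: "z \<in> cycles sl d \<and>
              \<upsilon> \<in> carrier_vec (nU sl M d) \<and> \<tau> \<in> carrier_vec (nT sl M d) \<and> \<phi> \<in> carrier_vec (nF sl M d) \<and>
              z = Ublk sl M d *\<^sub>v \<upsilon> + Tblk sl M d *\<^sub>v \<tau> + Fblk sl M d *\<^sub>v \<phi>"
    have cv: "\<upsilon> \<in> carrier_vec k" "\<tau> \<in> carrier_vec (p - k)" "\<phi> \<in> carrier_vec (n - (p + q))"
      using cvs H by auto
    have zE: "z = V *\<^sub>v emb \<upsilon> \<tau> \<phi>" using H Z[OF cv] by simp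
    define c where "c = (SOME c. c \<in> carrier_vec (nsimp sl d) \<and> M d *\<^sub>v c = z)"
    have ex: "\<exists>c. c \<in> carrier_vec (nsimp sl d) \<and> M d *\<^sub>v c = z"
      using embc zE unfolding V_def n_def by blast
    have cc: "c \<in> carrier_vec n" "V *\<^sub>v c = z" using someI_ex[OF ex] unfolding c_def V_def n_def by auto
    have ce: "c = emb \<upsilon> \<tau> \<phi>" using inv_inj[OF V cc(1) embc] cc(2) zE by simp
    have "hom_iso sl M d z = (vec (p - k) (\<lambda>i. residue (tors_coeff sl M d i) (c $ (k + i))),
      vec (n - (p + q)) (\<lambda>i. c $ (k + (p - k) + q + i)))"
      unfolding hom_iso_def Let_def c_def[symmetric] nU nT nR nF by simp
    also have "vec (p - k) (\<lambda>i. residue (tors_coeff sl M d i) (c $ (k + i)))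
       = vec (p - k) (\<lambda>i. residue (tors_coeff sl M d i) (\<tau> $ i))"
    proof (rule eq_vecI)
      fix i assume "i < dim_vec (vec (p - k) (\<lambda>i. residue (tors_coeff sl M d i) (\<tau> $ i)))"
      then have i: "i < p - k" by simp
      have "c $ (k + i) = \<tau> $ i" unfolding ce emb_def using i pn by simp
      then show "vec (p - k) (\<lambda>i. residue (tors_coeff sl M d i) (c $ (k + i))) $ i =
          vec (p - k) (\<lambda>i. residue (tors_coeff sl M d i) (\<tau> $ i)) $ i" using i by simp
    qed simp
    also have "vec (n - (p + q)) (\<lambda>i. c $ (k + (p - k) + q + i)) = \<phi>"
    proof (rule eq_vecI)
      fix i assume "i < dim_vec \<phi>"
      then have i: "i < n - (p + q)" using cv by simp
      have "k + (p - k) + q + i = p + q + i" using kp by simp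
      then show "vec (n - (p + q)) (\<lambda>i. c $ (k + (p - k) + q + i)) $ i = \<phi> $ i"
        unfolding ce emb_def using i by simp
    qed (use cv in simp)
    finally show "hom_iso sl M d z = (vec (nT sl M d) (\<lambda>i. residue (tors_coeff sl M d i) (\<tau> $ i)), \<phi>)"
      unfolding nT .
  qed
  define I where "I = Iset sl \<mu> d l"
  have Gdim: "dim_row (Gmat sl M d) = n" "dim_col (Gmat sl M d) = nU sl M d + nT sl M d + nF sl M d"
    unfolding Gmat_def n_def by auto
  have Isub: "I \<subseteq> {..<dim_row (Gmat sl M d)}" unfolding I_def Iset_def Gdim n_def by auto
  have zero_mult: "\<And>(A::'a mat) nr nc. A \<in> carrier_mat nr nc \<Longrightarrow> A *\<^sub>v 0\<^sub>v nc = 0\<^sub>v nr"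
    by (intro eq_vecI) auto
  have Uc: "Ublk sl M d \<in> carrier_mat n (nU sl M d)" unfolding Ublk_def col_block_def
    using V(1) unfolding V_def by auto
  have Tc: "Tblk sl M d \<in> carrier_mat n (nT sl M d)" unfolding Tblk_def col_block_def
    using V(1) unfolding V_def by auto
  have Fc: "Fblk sl M d \<in> carrier_mat n (nF sl M d)" unfolding Fblk_def col_block_def
    using V(1) unfolding V_def by auto
  have Ac: "Amat sl M d \<in> carrier_mat (nT sl M d) (nT sl M d)" unfolding Amat_def by auto
  have sup: "{hclass sl d z | z \<upsilon> \<tau> \<phi>. z \<in> cycles sl d \<and>
              \<upsilon> \<in> carrier_vec (nU sl M d) \<and> \<tau> \<in> carrier_vec (nT sl M d) \<and> \<phi> \<in> carrier_vec (nF sl M d) \<and>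
              z = Ublk sl M d *\<^sub>v \<upsilon> + Tblk sl M d *\<^sub>v \<tau> + Fblk sl M d *\<^sub>v \<phi> \<and>
              (\<upsilon> @\<^sub>v \<tau> @\<^sub>v \<phi>) \<in> mat_kernel (submatrix (Gmat sl M d) I UNIV)} \<subseteq> Hlevel sl M \<mu> d l"
  proof
    fix X assume "X \<in> {hclass sl d z | z \<upsilon> \<tau> \<phi>. z \<in> cycles sl d \<and>
              \<upsilon> \<in> carrier_vec (nU sl M d) \<and> \<tau> \<in> carrier_vec (nT sl M d) \<and> \<phi> \<in> carrier_vec (nF sl M d) \<and>
              z = Ublk sl M d *\<^sub>v \<upsilon> + Tblk sl M d *\<^sub>v \<tau> + Fblk sl M d *\<^sub>v \<phi> \<and>
              (\<upsilon> @\<^sub>v \<tau> @\<^sub>v \<phi>) \<in> mat_kernel (submatrix (Gmat sl M d) I UNIV)}"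
    then obtain z \<upsilon> \<tau> \<phi> where X: "X = hclass sl d z" and zc: "z \<in> cycles sl d"
      and c0: "\<upsilon> \<in> carrier_vec (nU sl M d)" "\<tau> \<in> carrier_vec (nT sl M d)" "\<phi> \<in> carrier_vec (nF sl M d)"
      and zd: "z = Ublk sl M d *\<^sub>v \<upsilon> + Tblk sl M d *\<^sub>v \<tau> + Fblk sl M d *\<^sub>v \<phi>"
      and ker: "(\<upsilon> @\<^sub>v \<tau> @\<^sub>v \<phi>) \<in> mat_kernel (submatrix (Gmat sl M d) I UNIV)"
      by auto
    have cv: "\<upsilon> \<in> carrier_vec k" "\<tau> \<in> carrier_vec (p - k)" "\<phi> \<in> carrier_vec (n - (p + q))"
      using cvs[OF c0] by auto
    have zG: "Gmat sl M d *\<^sub>v (\<upsilon> @\<^sub>v \<tau> @\<^sub>v \<phi>) = z" using Gm[OF cv] Z[OF cv] zd by simp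
    have zI: "z $ i = 0" if "i \<in> I" for i
      using kernel_rows[OF Isub ker that] zG by simp
    have Iln: "i \<in> I \<Longrightarrow> i < n" for i using Isub Gdim by auto
    have "S_solvable sl M d z I"
      unfolding S_solvable_def
    proof (intro bexI ballI)
      fix i assume i: "i \<in> I"
      have "Amat sl M d *\<^sub>v 0\<^sub>v (nT sl M d) = 0\<^sub>v (nT sl M d)" using zero_mult[OF Ac] .
      moreover have "Tblk sl M d *\<^sub>v 0\<^sub>v (nT sl M d) = 0\<^sub>v n" using zero_mult[OF Tc] .
      moreover have "Ublk sl M d *\<^sub>v 0\<^sub>v (nU sl M d) = 0\<^sub>v n" using zero_mult[OF Uc] .
      ultimately show "(Ublk sl M d *\<^sub>v 0\<^sub>v (nU sl M d) + Tblk sl M d *\<^sub>v (Amat sl M d *\<^sub>v 0\<^sub>v (nT sl M d))) $ i = - z $ i"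
        using zI[OF i] Iln[OF i] by simp
    qed auto
    then show "X \<in> Hlevel sl M \<mu> d l" unfolding Hlevel_def homology_def I_def[symmetric] using X zc by blast
  qed
  have sub: "Hlevel sl M \<mu> d l \<subseteq> {hclass sl d z | z \<upsilon> \<tau> \<phi>. z \<in> cycles sl d \<and>
              \<upsilon> \<in> carrier_vec (nU sl M d) \<and> \<tau> \<in> carrier_vec (nT sl M d) \<and> \<phi> \<in> carrier_vec (nF sl M d) \<and>
              z = Ublk sl M d *\<^sub>v \<upsilon> + Tblk sl M d *\<^sub>v \<tau> + Fblk sl M d *\<^sub>v \<phi> \<and>
              (\<upsilon> @\<^sub>v \<tau> @\<^sub>v \<phi>) \<in> mat_kernel (submatrix (Gmat sl M d) I UNIV)}"
  proof
    fix X assume "X \<in> Hlevel sl M \<mu> d l"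
    then obtain h where hc: "h \<in> cycles sl d" and X: "X = hclass sl d h" and S: "S_solvable sl M d h I"
      unfolding Hlevel_def I_def by blast
    obtain \<upsilon>0 \<tau>0 where u0: "\<upsilon>0 \<in> carrier_vec (nU sl M d)" and t0: "\<tau>0 \<in> carrier_vec (nT sl M d)"
      and eqs: "\<And>i. i \<in> I \<Longrightarrow> (Ublk sl M d *\<^sub>v \<upsilon>0 + Tblk sl M d *\<^sub>v (Amat sl M d *\<^sub>v \<tau>0)) $ i = - (h $ i)"
      using S unfolding S_solvable_def by blast
    define b where "b = Ublk sl M d *\<^sub>v \<upsilon>0 + Tblk sl M d *\<^sub>v (Amat sl M d *\<^sub>v \<tau>0)"
    have At0: "Amat sl M d *\<^sub>v \<tau>0 \<in> carrier_vec (nT sl M d)" using Ac t0 by simp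
    have cv0: "\<upsilon>0 \<in> carrier_vec k" "Amat sl M d *\<^sub>v \<tau>0 \<in> carrier_vec (p - k)"
      "0\<^sub>v (n - (p + q)) \<in> carrier_vec (n - (p + q))"
      using u0 At0 unfolding nU nT by auto
    define x where "x = emb \<upsilon>0 (Amat sl M d *\<^sub>v \<tau>0) (0\<^sub>v (n - (p + q)))"
    have xc: "x \<in> carrier_vec n" unfolding x_def by (rule embc)
    have bc: "b \<in> carrier_vec n" unfolding b_def using Uc Tc u0 At0 by simp
    have bx: "b = V *\<^sub>v x"
    proof -
      have "Fblk sl M d *\<^sub>v 0\<^sub>v (n - (p + q)) = 0\<^sub>v n" using zero_mult[OF Fc] unfolding nF .
      then have "V *\<^sub>v x = b + 0\<^sub>v n" using Z[OF cv0] unfolding x_def b_def by simp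
      then show ?thesis using bc by simp
    qed
    have Aent: "(Amat sl M d *\<^sub>v \<tau>0) $ i = a (k + i) * \<tau>0 $ i" if i: "i < p - k" for i
    proof -
      have Ac': "Amat sl M d \<in> carrier_mat (p - k) (p - k)" using Ac unfolding nT .
      have nzA: "\<forall>i<p - k. \<forall>j<p - k. (Amat sl M d $$ (i, j) \<noteq> 0) = (i < p - k \<and> j = 0 + i)"
        unfolding Amat_def nT using tors anz by auto
      have "(Amat sl M d *\<^sub>v \<tau>0) $ i = Amat sl M d $$ (i, i) * \<tau>0 $ i"
        using diag_mult[OF Ac' nzA _ _ i] t0 unfolding nT using i by simp
      also have "\<dots> = a (k + i) * \<tau>0 $ i" unfolding Amat_def nT using i tors by simp
      finally show ?thesis .
    qed
    have xdiv: "a j dvd x $ j" if j: "j < p" for j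
    proof (cases "j < k")
      case True
      then have "a j dvd 1" using unit_iff j by simp
      then show ?thesis using dvd_trans one_dvd by blast
    next
      case False
      then have "x $ j = (Amat sl M d *\<^sub>v \<tau>0) $ (j - k)" unfolding x_def emb_def using j pn by simp
      also have "\<dots> = a j * \<tau>0 $ (j - k)" using Aent[of "j - k"] j False by simp
      finally show ?thesis by simp
    qed
    have x0: "x $ j = 0" if "p \<le> j" "j < n" for j
      unfolding x_def emb_def using that kp by auto
    define w where "w = vec m (\<lambda>t. if s \<le> t \<and> t < s + p then (SOME y. x $ (t - s) = a (t - s) * y) else 0)"
    have wc: "w \<in> carrier_vec m" unfolding w_def by simp
    have Dw: "D *\<^sub>v w = x"
    proof (rule eq_vecI)
      fix j assume "j < dim_vec x"
      then have j: "j < n" using xc by simp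
      have Dnz': "\<forall>i<n. \<forall>j<m. (D $$ (i, j) \<noteq> 0) = (i < p \<and> j = s + i)" using Dnz by blast
      have e: "(D *\<^sub>v w) $ j = (if j < p then D $$ (j, s + j) * w $ (s + j) else 0)"
        by (rule diag_mult[OF D(1) Dnz' sp wc j])
      show "(D *\<^sub>v w) $ j = x $ j"
      proof (cases "j < p")
        case True
        have ex: "\<exists>y. x $ j = a j * y" using xdiv[OF True] by (auto simp: dvd_def)
        have "w $ (s + j) = (SOME y. x $ j = a j * y)" unfolding w_def using True sp by simp
        then have "a j * w $ (s + j) = x $ j" using someI_ex[OF ex] by simp
        then show ?thesis using e True unfolding a_def by simp
      next
        case False
        then show ?thesis using e x0[OF _ j] by simp
      qed
    qed (use D(1) xc in simp)
    have bB: "b \<in> boundaries sl d"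
    proof -
      have "b = V *\<^sub>v (D *\<^sub>v w)" using bx Dw by simp
      also have "\<dots> = (V * D) *\<^sub>v w" using V(1) D(1) wc by simp
      also have "\<dots> = (bdry_mat sl (Suc d) * M (Suc d)) *\<^sub>v w" using D(2) by simp
      also have "\<dots> = bdry_mat sl (Suc d) *\<^sub>v (M (Suc d) *\<^sub>v w)" by (rule assoc_mult_mat_vec[OF bdS M1 wc])
      finally have "b = bdry_mat sl (Suc d) *\<^sub>v (M (Suc d) *\<^sub>v w)" .
      moreover have "M (Suc d) *\<^sub>v w \<in> carrier_vec (nsimp sl (Suc d))" using M1 wc unfolding m_def by simp
      ultimately show ?thesis unfolding boundaries_def by blast
    qed
    have hcar: "h \<in> carrier_vec n" using hc unfolding cycles_def n_def by simp
    obtain ch where ch: "ch \<in> carrier_vec n" "V *\<^sub>v ch = h" using inv_surj[OF V hcar] by blast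
    have ch0: "\<forall>i<q. ch $ (p + i) = 0" using cyc_iff[OF ch(1)] ch(2) hc by simp
    define c' where "c' = ch + x"
    have c'c: "c' \<in> carrier_vec n" unfolding c'_def using ch(1) xc by simp
    have z'e: "h + b = V *\<^sub>v c'" unfolding c'_def using ch bx mult_add_distrib_mat_vec[OF V(1) ch(1) xc] by simp
    have c'0: "\<forall>i<q. c' $ (p + i) = 0" unfolding c'_def using ch0 x0 ch(1) xc pq by simp
    have z'c: "h + b \<in> cycles sl d" using cyc_iff[OF c'c] c'0 z'e by simp
    define \<upsilon>' where "\<upsilon>' = vec k (\<lambda>j. c' $ j)"
    define \<tau>' where "\<tau>' = vec (p - k) (\<lambda>j. c' $ (k + j))"
    define \<phi>' where "\<phi>' = vec (n - (p + q)) (\<lambda>j. c' $ (p + q + j))"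
    have cv': "\<upsilon>' \<in> carrier_vec k" "\<tau>' \<in> carrier_vec (p - k)" "\<phi>' \<in> carrier_vec (n - (p + q))"
      unfolding \<upsilon>'_def \<tau>'_def \<phi>'_def by auto
    have embc': "emb \<upsilon>' \<tau>' \<phi>' = c'"
    proof (rule eq_vecI)
      fix j assume "j < dim_vec c'"
      then have j: "j < n" using c'c by simp
      have mid: "c' $ j = 0" if "p \<le> j" "j < p + q"
        using c'0[rule_format, of "j - p"] that by simp
      show "emb \<upsilon>' \<tau>' \<phi>' $ j = c' $ j"
        unfolding emb_def \<upsilon>'_def \<tau>'_def \<phi>'_def using j kp mid by auto
    qed (use c'c embc in simp)
    have z'd: "h + b = Ublk sl M d *\<^sub>v \<upsilon>' + Tblk sl M d *\<^sub>v \<tau>' + Fblk sl M d *\<^sub>v \<phi>'"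
      using Z[OF cv'] embc' z'e by simp
    have kerm: "(\<upsilon>' @\<^sub>v \<tau>' @\<^sub>v \<phi>') \<in> mat_kernel (submatrix (Gmat sl M d) I UNIV)"
    proof (rule kernel_rowsI[OF Isub])
      show "\<upsilon>' @\<^sub>v \<tau>' @\<^sub>v \<phi>' \<in> carrier_vec (dim_col (Gmat sl M d))"
      proof -
        have "\<upsilon>' @\<^sub>v \<tau>' @\<^sub>v \<phi>' \<in> carrier_vec (k + ((p - k) + (n - (p + q))))"
          using cv' by (intro append_carrier_vec) auto
        then show ?thesis unfolding Gdim nU nT nF by (simp add: add.assoc)
      qed
      fix i assume i: "i \<in> I"
      have iI: "i < n" using i Isub Gdim by auto
      have "Gmat sl M d *\<^sub>v (\<upsilon>' @\<^sub>v \<tau>' @\<^sub>v \<phi>') = h + b" using Gm[OF cv'] embc' z'e by simp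
      moreover have "(h + b) $ i = 0" using eqs[OF i] iI hcar bc unfolding b_def[symmetric] by simp
      ultimately show "(Gmat sl M d *\<^sub>v (\<upsilon>' @\<^sub>v \<tau>' @\<^sub>v \<phi>')) $ i = 0" by simp
    qed
    have cv'': "\<upsilon>' \<in> carrier_vec (nU sl M d)" "\<tau>' \<in> carrier_vec (nT sl M d)" "\<phi>' \<in> carrier_vec (nF sl M d)"
      using cv' unfolding nU nT nF by auto
    have XX: "X = hclass sl d (h + b)" using X hclass_shift[OF _ bB] hcar unfolding n_def by simp
    show "X \<in> {hclass sl d z | z \<upsilon> \<tau> \<phi>. z \<in> cycles sl d \<and>
              \<upsilon> \<in> carrier_vec (nU sl M d) \<and> \<tau> \<in> carrier_vec (nT sl M d) \<and> \<phi> \<in> carrier_vec (nF sl M d) \<and>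
              z = Ublk sl M d *\<^sub>v \<upsilon> + Tblk sl M d *\<^sub>v \<tau> + Fblk sl M d *\<^sub>v \<phi> \<and>
              (\<upsilon> @\<^sub>v \<tau> @\<^sub>v \<phi>) \<in> mat_kernel (submatrix (Gmat sl M d) I UNIV)}"
      using XX z'c cv'' z'd kerm by blast
  qed
  show ?thesis using sub sup part2 unfolding I_def by blast
qed

end
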